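(* Let $C$ be an ordered field and $I$ a nonempty index set. The complete $\mathcal{L}_{C,I}$-theory $T_{C,I}$ is distal.
   Context: An $I$-ordered $C$-vector space is a $C$-vector space $G$ with a family $(<_i)_{i\in I}$ of total orderings such that for each $i$, $(G,<_i)$ is an ordered $C$-vector space. The $I$-ordering is independent if for every $n$, distinct $i_1,\dots,i_n\in I$ and $a_1,b_1,\dots,a_n,b_n\in G\cup\{-\infty,+\infty\}$ with $a_k<_{i_k}b_k$ ($k=1,\dots,n$), there is $z\in G$ with $a_k<_{i_k}z<_{i_k}b_k$ for all $k$. The language is $\mathcal{L}_{C,I}=\{0,+,(\lambda_c)_{c\in C}\}\cup\{<_i:i\in I\}$, with $\lambda_c$ scalar multiplication by $c$, and $T_{C,I}$ is the theory whose models are exactly the $I$-ordered $C$-vector spaces with independent $I$-ordering (it is complete). A complete theory $T$ is distal if, in a monster model, for every parameter set $A$ and every indiscernible sequence $(a_i)_{i\in I'}$ with $I'=I_1+(c)+I_2$, $I_1,I_2$ infinite, such that $(a_i)_{i\in I_1+I_2}$ is $A$-indiscernible, the whole sequence is $A$-indiscernible. *)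

theory Defs
  imports Complex_Main
begin

text \<open>The underlying C-vector space is the whole type 'g (class ab_group_add gives 0 and +),
  with scalar multiplication smul (interpreting the function symbols lambda_c).
  The orderings are lt i, for i in the index type 'i (index set I = UNIV :: 'i set,
  automatically nonempty).\<close>

definition ordered_vs :: "('c::linordered_field \<Rightarrow> 'g::ab_group_add \<Rightarrow> 'g) \<Rightarrow> ('g \<Rightarrow> 'g \<Rightarrow> bool) \<Rightarrow> bool" where
  "ordered_vs smul lt \<longleftrightarrow>
     (\<forall>x. \<not> lt x x) \<and>
     (\<forall>x y z. lt x y \<longrightarrow> lt y z \<longrightarrow> lt x z) \<and>
     (\<forall>x y. x \<noteq> y \<longrightarrow> lt x y \<or> lt y x) \<and>
     (\<forall>x y z. lt x y \<longrightarrow> lt (x + z) (y + z)) \<and>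
     (\<forall>(c::'c) x y. 0 < c \<longrightarrow> lt x y \<longrightarrow> lt (smul c x) (smul c y))"

text \<open>Independence: None as a lower bound means -infinity, None as an upper bound +infinity.
  A finite set J of distinct indices i_1,...,i_n.\<close>

definition independent_ordering :: "('i \<Rightarrow> 'g \<Rightarrow> 'g \<Rightarrow> bool) \<Rightarrow> bool" where
  "independent_ordering lt \<longleftrightarrow>
     (\<forall>(J::'i set) (a::'i \<Rightarrow> 'g option) (b::'i \<Rightarrow> 'g option). finite J \<longrightarrow>
        (\<forall>k\<in>J. \<forall>a' b'. a k = Some a' \<longrightarrow> b k = Some b' \<longrightarrow> lt k a' b') \<longrightarrow>
        (\<exists>z. \<forall>k\<in>J. (case a k of None \<Rightarrow> True | Some a' \<Rightarrow> lt k a' z) \<and>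
                    (case b k of None \<Rightarrow> True | Some b' \<Rightarrow> lt k z b')))"

definition model_T :: "('c::linordered_field \<Rightarrow> 'g::ab_group_add \<Rightarrow> 'g) \<Rightarrow> ('i \<Rightarrow> 'g \<Rightarrow> 'g \<Rightarrow> bool) \<Rightarrow> bool" where
  "model_T smul lt \<longleftrightarrow> vector_space smul \<and> (\<forall>i. ordered_vs smul (lt i)) \<and> independent_ordering lt"

datatype ('c, 'g) trm = Var nat | Par 'g | Zero | Plus "('c, 'g) trm" "('c, 'g) trm" | Scal 'c "('c, 'g) trm"

datatype ('c, 'i, 'g) fm =
    Eq "('c, 'g) trm" "('c, 'g) trm"
  | Less 'i "('c, 'g) trm" "('c, 'g) trm"
  | Neg "('c, 'i, 'g) fm"
  | Conj "('c, 'i, 'g) fm" "('c, 'i, 'g) fm"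
  | Ex nat "('c, 'i, 'g) fm"

primrec params_trm :: "('c, 'g) trm \<Rightarrow> 'g set" where
  "params_trm (Var x) = {}"
| "params_trm (Par g) = {g}"
| "params_trm Zero = {}"
| "params_trm (Plus s t) = params_trm s \<union> params_trm t"
| "params_trm (Scal c t) = params_trm t"

primrec params :: "('c, 'i, 'g) fm \<Rightarrow> 'g set" where
  "params (Eq s t) = params_trm s \<union> params_trm t"
| "params (Less i s t) = params_trm s \<union> params_trm t"
| "params (Neg \<phi>) = params \<phi>"
| "params (Conj \<phi> \<psi>) = params \<phi> \<union> params \<psi>"
| "params (Ex x \<phi>) = params \<phi>"

primrec eval :: "('c \<Rightarrow> 'g::ab_group_add \<Rightarrow> 'g) \<Rightarrow> (nat \<Rightarrow> 'g) \<Rightarrow> ('c, 'g) trm \<Rightarrow> 'g" where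
  "eval smul v (Var x) = v x"
| "eval smul v (Par g) = g"
| "eval smul v Zero = 0"
| "eval smul v (Plus s t) = eval smul v s + eval smul v t"
| "eval smul v (Scal c t) = smul c (eval smul v t)"

primrec sat :: "('c \<Rightarrow> 'g::ab_group_add \<Rightarrow> 'g) \<Rightarrow> ('i \<Rightarrow> 'g \<Rightarrow> 'g \<Rightarrow> bool) \<Rightarrow> (nat \<Rightarrow> 'g) \<Rightarrow> ('c, 'i, 'g) fm \<Rightarrow> bool" where
  "sat smul lt v (Eq s t) = (eval smul v s = eval smul v t)"
| "sat smul lt v (Less i s t) = lt i (eval smul v s) (eval smul v t)"
| "sat smul lt v (Neg \<phi>) = (\<not> sat smul lt v \<phi>)"
| "sat smul lt v (Conj \<phi> \<psi>) = (sat smul lt v \<phi> \<and> sat smul lt v \<psi>)"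
| "sat smul lt v (Ex x \<phi>) = (\<exists>g. sat smul lt (v(x := g)) \<phi>)"

text \<open>A sequence of n-tuples a :: 'o \<Rightarrow> nat \<Rightarrow> 'g (only coordinates < n matter).
  For an increasing k-tuple s of indices, the assignment sends variable p*n+q (p<k, q<n)
  to coordinate q of a (s p); all other variables are sent to 0.\<close>

definition seq_asg :: "nat \<Rightarrow> ('o \<Rightarrow> nat \<Rightarrow> 'g::zero) \<Rightarrow> nat \<Rightarrow> (nat \<Rightarrow> 'o) \<Rightarrow> nat \<Rightarrow> 'g" where
  "seq_asg n a k s x = (if x < k * n then a (s (x div n)) (x mod n) else 0)"

definition incr_in :: "'o::linorder set \<Rightarrow> nat \<Rightarrow> (nat \<Rightarrow> 'o) \<Rightarrow> bool" where
  "incr_in J k s \<longleftrightarrow> (\<forall>p<k. s p \<in> J) \<and> (\<forall>p q. p < q \<longrightarrow> q < k \<longrightarrow> s p < s q)"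

definition indiscernible ::
  "('c \<Rightarrow> 'g::ab_group_add \<Rightarrow> 'g) \<Rightarrow> ('i \<Rightarrow> 'g \<Rightarrow> 'g \<Rightarrow> bool) \<Rightarrow> nat \<Rightarrow> ('o::linorder \<Rightarrow> nat \<Rightarrow> 'g) \<Rightarrow> 'o set \<Rightarrow> 'g set \<Rightarrow> bool" where
  "indiscernible smul lt n a J A \<longleftrightarrow>
     (\<forall>(\<phi>::('c, 'i, 'g) fm) k s t. params \<phi> \<subseteq> A \<longrightarrow> incr_in J k s \<longrightarrow> incr_in J k t \<longrightarrow>
        (sat smul lt (seq_asg n a k s) \<phi> \<longleftrightarrow> sat smul lt (seq_asg n a k t) \<phi>))"

end

theory Submission
  imports Defs
begin

primrec subst :: "nat \<Rightarrow> ('c, 'g) trm \<Rightarrow> ('c, 'g) trm \<Rightarrow> ('c, 'g) trm" where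
  "subst y s (Var x) = (if x = y then s else Var x)"
| "subst y s (Par g) = Par g"
| "subst y s Zero = Zero"
| "subst y s (Plus t u) = Plus (subst y s t) (subst y s u)"
| "subst y s (Scal c t) = Scal c (subst y s t)"

primrec coef :: "nat \<Rightarrow> ('c::field, 'g) trm \<Rightarrow> 'c" where
  "coef y (Var x) = (if x = y then 1 else 0)"
| "coef y (Par g) = 0"
| "coef y Zero = 0"
| "coef y (Plus t u) = coef y t + coef y u"
| "coef y (Scal c t) = c * coef y t"

primrec rename :: "(nat \<Rightarrow> nat) \<Rightarrow> ('c, 'g) trm \<Rightarrow> ('c, 'g) trm" where
  "rename r (Var x) = Var (r x)"
| "rename r (Par g) = Par g"
| "rename r Zero = Zero"
| "rename r (Plus t u) = Plus (rename r t) (rename r u)"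
| "rename r (Scal c t) = Scal c (rename r t)"

primrec zpar :: "('c, 'g) trm \<Rightarrow> ('c, 'g) trm" where
  "zpar (Var x) = Var x"
| "zpar (Par g) = Zero"
| "zpar Zero = Zero"
| "zpar (Plus t u) = Plus (zpar t) (zpar u)"
| "zpar (Scal c t) = Scal c (zpar t)"

datatype ('c, 'i, 'g) lit = LEq "('c, 'g) trm" | LNeq "('c, 'g) trm" | LLt 'i "('c, 'g) trm"

primrec lterm :: "('c, 'i, 'g) lit \<Rightarrow> ('c, 'g) trm" where
  "lterm (LEq t) = t" | "lterm (LNeq t) = t" | "lterm (LLt i t) = t"

primrec lmap :: "(('c, 'g) trm \<Rightarrow> ('c, 'g) trm) \<Rightarrow> ('c, 'i, 'g) lit \<Rightarrow> ('c, 'i, 'g) lit" where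
  "lmap f (LEq t) = LEq (f t)" | "lmap f (LNeq t) = LNeq (f t)" | "lmap f (LLt i t) = LLt i (f t)"

primrec is_LEq :: "('c, 'i, 'g) lit \<Rightarrow> bool" where
  "is_LEq (LEq t) = True" | "is_LEq (LNeq t) = False" | "is_LEq (LLt i t) = False"

primrec holds :: "('c \<Rightarrow> 'g::ab_group_add \<Rightarrow> 'g) \<Rightarrow> ('i \<Rightarrow> 'g \<Rightarrow> 'g \<Rightarrow> bool) \<Rightarrow> (nat \<Rightarrow> 'g) \<Rightarrow> ('c, 'i, 'g) lit \<Rightarrow> bool" where
  "holds smul lt v (LEq t) = (eval smul v t = 0)"
| "holds smul lt v (LNeq t) = (eval smul v t \<noteq> 0)"
| "holds smul lt v (LLt i t) = lt i 0 (eval smul v t)"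

definition dnf :: "('c \<Rightarrow> 'g::ab_group_add \<Rightarrow> 'g) \<Rightarrow> ('i \<Rightarrow> 'g \<Rightarrow> 'g \<Rightarrow> bool) \<Rightarrow> (nat \<Rightarrow> 'g) \<Rightarrow> ('c, 'i, 'g) lit list list \<Rightarrow> bool" where
  "dnf smul lt v D \<longleftrightarrow> (\<exists>C\<in>set D. \<forall>l\<in>set C. holds smul lt v l)"

definition conj_dnf :: "'a list list \<Rightarrow> 'a list list \<Rightarrow> 'a list list" where
  "conj_dnf D1 D2 = concat (map (\<lambda>C1. map (\<lambda>C2. C1 @ C2) D2) D1)"

primrec neg_lit :: "('c::field, 'i, 'g) lit \<Rightarrow> ('c, 'i, 'g) lit list list" where
  "neg_lit (LEq t) = [[LNeq t]]"
| "neg_lit (LNeq t) = [[LEq t]]"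
| "neg_lit (LLt i t) = [[LEq t], [LLt i (Scal (-1) t)]]"

definition neg_conj :: "('c::field, 'i, 'g) lit list \<Rightarrow> ('c, 'i, 'g) lit list list" where
  "neg_conj C = concat (map neg_lit C)"

definition neg_dnf :: "('c::field, 'i, 'g) lit list list \<Rightarrow> ('c, 'i, 'g) lit list list" where
  "neg_dnf D = foldr (\<lambda>C acc. conj_dnf (neg_conj C) acc) D [[]]"

definition bnd :: "nat \<Rightarrow> ('c::field, 'g) trm \<Rightarrow> ('c, 'g) trm" where
  "bnd y t = Scal (- inverse (coef y t)) (subst y Zero t)"

fun pair_lit :: "nat \<Rightarrow> ('c::linordered_field, 'i, 'g) lit \<Rightarrow> ('c, 'i, 'g) lit \<Rightarrow> ('c, 'i, 'g) lit list" where
  "pair_lit y (LLt i t1) (LLt j t2) =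
     (if i = j \<and> 0 < coef y t1 \<and> coef y t2 < 0 then [LLt i (Plus (bnd y t2) (Scal (-1) (bnd y t1)))] else [])"
| "pair_lit y _ _ = []"

definition pairs :: "nat \<Rightarrow> ('c::linordered_field, 'i, 'g) lit list \<Rightarrow> ('c, 'i, 'g) lit list" where
  "pairs y C = concat (map (\<lambda>l1. concat (map (\<lambda>l2. pair_lit y l1 l2) C)) C)"

definition solv :: "nat \<Rightarrow> ('c::field, 'i, 'g) lit \<Rightarrow> bool" where
  "solv y l \<longleftrightarrow> is_LEq l \<and> coef y (lterm l) \<noteq> 0"

definition elim :: "nat \<Rightarrow> ('c::linordered_field, 'i, 'g) lit list \<Rightarrow> ('c, 'i, 'g) lit list" where
  "elim y C = (case find (solv y) C of
      Some l \<Rightarrow> map (lmap (subst y (bnd y (lterm l)))) C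
    | None \<Rightarrow> map (lmap (subst y Zero)) (filter (\<lambda>l. coef y (lterm l) = 0) C) @ pairs y C)"

primrec lparams :: "('c, 'i, 'g) lit \<Rightarrow> 'g set" where
  "lparams (LEq t) = params_trm t" | "lparams (LNeq t) = params_trm t" | "lparams (LLt i t) = params_trm t"

lemma lparams_lterm: "lparams l = params_trm (lterm l)"
  by (cases l) auto

lemma params_subst: "params_trm (subst y s t) \<subseteq> params_trm t \<union> params_trm s"
  by (induction t) auto

lemma params_rename[simp]: "params_trm (rename r t) = params_trm t"
  by (induction t) auto

lemma params_zpar[simp]: "params_trm (zpar t) = {}"
  by (induction t) auto

lemma params_bnd: "params_trm (bnd y t) \<subseteq> params_trm t"
  unfolding bnd_def using params_subst[of y Zero t] by auto

lemma lparams_lmap: "(\<And>t. params_trm (f t) \<subseteq> params_trm t \<union> P) \<Longrightarrow> lparams (lmap f l) \<subseteq> lparams l \<union> P"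
  by (cases l) auto

lemma params_pair_lit: "l' \<in> set (pair_lit y l1 l2) \<Longrightarrow> lparams l' \<subseteq> lparams l1 \<union> lparams l2"
  by (induction y l1 l2 rule: pair_lit.induct) (auto dest: subsetD[OF params_bnd] split: if_splits)

lemma params_pairs: "l' \<in> set (pairs y C) \<Longrightarrow> \<exists>l\<in>set C. lparams l' \<subseteq> lparams l \<union> \<Union>(lparams ` set C)"
  unfolding pairs_def by (auto dest!: params_pair_lit)

lemma params_elim:
  assumes "l' \<in> set (elim y C)"
  shows "lparams l' \<subseteq> \<Union>(lparams ` set C)"
proof (cases "find (solv y) C")
  case None
  then show ?thesis using assms params_pairs[of l' y C] lparams_lmap[of "subst y Zero", OF params_subst]
    unfolding elim_def by fastforce
next
  case (Some l)
  then have "l \<in> set C" by (auto simp: find_Some_iff)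
  then have "params_trm (bnd y (lterm l)) \<subseteq> \<Union>(lparams ` set C)"
    using params_bnd[of y "lterm l"] \<open>l \<in> set C\<close> by (auto simp: lparams_lterm)
  then show ?thesis using assms Some
    lparams_lmap[of "subst y (bnd y (lterm l))" "\<Union>(lparams ` set C)", OF order.trans[OF params_subst]]
    unfolding elim_def by fastforce
qed

locale tmodel =
  fixes smul :: "'c::linordered_field \<Rightarrow> 'g::ab_group_add \<Rightarrow> 'g"
    and lt :: "'i \<Rightarrow> 'g \<Rightarrow> 'g \<Rightarrow> bool"
  assumes mt: "model_T smul lt"
begin

sublocale vs: vector_space smul
  using mt by (simp add: model_T_def)

lemma ovs: "ordered_vs smul (lt i)"
  using mt by (simp add: model_T_def)

lemma indep: "independent_ordering lt"
  using mt by (simp add: model_T_def)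

lemma lt_irrefl[simp]: "\<not> lt i x x"
  using ovs[of i] by (simp add: ordered_vs_def)

lemma lt_trans: "lt i x y \<Longrightarrow> lt i y z \<Longrightarrow> lt i x z"
  using ovs[of i] unfolding ordered_vs_def by blast

lemma lt_total: "x \<noteq> y \<Longrightarrow> lt i x y \<or> lt i y x"
  using ovs[of i] unfolding ordered_vs_def by blast

lemma lt_asym: "lt i x y \<Longrightarrow> \<not> lt i y x"
  using lt_trans lt_irrefl by blast

lemma lt_add: "lt i x y \<Longrightarrow> lt i (x + z) (y + z)"
  using ovs[of i] unfolding ordered_vs_def by blast

lemma lt_add_iff: "lt i (x + z) (y + z) \<longleftrightarrow> lt i x y"
  using lt_add[of i "x + z" "y + z" "- z"] lt_add[of i x y z] by auto

lemma lt_sub: "lt i x y \<longleftrightarrow> lt i 0 (y - x)"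
proof -
  have "lt i (x + - x) (y + - x) \<longleftrightarrow> lt i x y" by (rule lt_add_iff)
  then show ?thesis by simp
qed

lemma lt_scale_pos: "0 < c \<Longrightarrow> lt i x y \<Longrightarrow> lt i (smul c x) (smul c y)"
  using ovs[of i] unfolding ordered_vs_def by blast

lemma lt_scale_pos_iff: "0 < c \<Longrightarrow> lt i (smul c x) (smul c y) \<longleftrightarrow> lt i x y"
  using lt_scale_pos[of c i x y] lt_scale_pos[of "inverse c" i "smul c x" "smul c y"] by auto

lemma lt_neg: "lt i x y \<longleftrightarrow> lt i (- y) (- x)"
proof -
  have "lt i (x + (- x - y)) (y + (- x - y)) \<longleftrightarrow> lt i x y" by (rule lt_add_iff)
  moreover have "x + (- x - y) = - y" "y + (- x - y) = - x" by (simp_all add: algebra_simps)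
  ultimately show ?thesis by simp
qed

lemma lt_scale_neg_iff: "c < 0 \<Longrightarrow> lt i (smul c x) (smul c y) \<longleftrightarrow> lt i y x"
proof -
  assume c: "c < 0"
  have "lt i (smul c x) (smul c y) \<longleftrightarrow> lt i (smul (- c) y) (smul (- c) x)"
    using lt_neg[of i "smul c x" "smul c y"] by simp
  also have "\<dots> \<longleftrightarrow> lt i y x" using c lt_scale_pos_iff[of "- c" i y x] by simp
  finally show ?thesis .
qed

lemma smul_m1[simp]: "smul (-1) x = - x"
  by simp

lemma eval_subst: "eval smul v (subst y s t) = eval smul (v(y := eval smul v s)) t"
  by (induction t) auto

lemma eval_rename: "eval smul v (rename r t) = eval smul (v \<circ> r) t"
  by (induction t) auto

lemma eval_zpar: "eval smul v t = eval smul v (zpar t) + eval smul (\<lambda>_. 0) t"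
  by (induction t) (auto simp: algebra_simps vs.scale_right_distrib)

lemma eval_lin: "eval smul v t = smul (coef y t) (v y) + eval smul (v(y := 0)) t"
  by (induction t) (auto simp: algebra_simps vs.scale_right_distrib vs.scale_left_distrib)

lemma eval_coef0: "coef y t = 0 \<Longrightarrow> eval smul (v(y := g)) t = eval smul v (subst y Zero t)"
  using eval_lin[of "v(y := g)" t y] by (simp add: eval_subst)

definition indepv :: "nat \<Rightarrow> ('c, 'g) trm \<Rightarrow> bool" where
  "indepv y s \<longleftrightarrow> (\<forall>v g. eval smul (v(y := g)) s = eval smul v s)"

lemma indepv_subst_Zero: "indepv y (subst y Zero t)"
  unfolding indepv_def by (simp add: eval_subst)

lemma indepv_bnd: "indepv y (bnd y t)"
  using indepv_subst_Zero[of y t] unfolding indepv_def bnd_def by simp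

lemma eval_bnd: "eval smul v (bnd y t) = smul (- inverse (coef y t)) (eval smul (v(y := 0)) t)"
  unfolding bnd_def by (simp add: eval_subst)

lemma holds_lmap_subst: "holds smul lt v (lmap (subst y s) l) = holds smul lt (v(y := eval smul v s)) l"
  by (cases l) (auto simp: eval_subst)

lemma solve_eq:
  assumes c: "c \<noteq> 0"
  shows "smul c g + r = 0 \<longleftrightarrow> g = smul (- inverse c) r"
proof
  assume h: "smul c g + r = 0"
  have "r = (smul c g + r) - smul c g" by simp
  also have "\<dots> = - smul c g" using h by simp
  finally have r: "r = - smul c g" .
  have "smul (- inverse c) (- smul c g) = smul (inverse c * c) g" by simp
  also have "\<dots> = g" using c by simp
  finally show "g = smul (- inverse c) r" using r by simp
next
  assume h: "g = smul (- inverse c) r"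
  have "smul c (smul (- inverse c) r) = smul (- (c * inverse c)) r" by simp
  also have "\<dots> = - r" using c by simp
  finally show "smul c g + r = 0" using h by simp
qed

lemma solve_lt_pos:
  assumes "0 < c"
  shows "lt i 0 (smul c g + r) \<longleftrightarrow> lt i (smul (- inverse c) r) g"
proof -
  have "lt i (- r + r) (smul c g + r) \<longleftrightarrow> lt i (- r) (smul c g)" by (rule lt_add_iff)
  then have "lt i 0 (smul c g + r) \<longleftrightarrow> lt i (- r) (smul c g)" by simp
  also have "\<dots> \<longleftrightarrow> lt i (smul (inverse c) (- r)) (smul (inverse c) (smul c g))"
    using lt_scale_pos_iff[of "inverse c" i "- r" "smul c g"] assms by simp
  also have "\<dots> \<longleftrightarrow> lt i (smul (- inverse c) r) g" using assms by simp
  finally show ?thesis .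
qed

lemma solve_lt_neg:
  assumes "c < 0"
  shows "lt i 0 (smul c g + r) \<longleftrightarrow> lt i g (smul (- inverse c) r)"
proof -
  have "lt i (- r + r) (smul c g + r) \<longleftrightarrow> lt i (- r) (smul c g)" by (rule lt_add_iff)
  then have "lt i 0 (smul c g + r) \<longleftrightarrow> lt i (- r) (smul c g)" by simp
  also have "\<dots> \<longleftrightarrow> lt i (smul (inverse c) (smul c g)) (smul (inverse c) (- r))"
    using lt_scale_neg_iff[of "inverse c" i "smul c g" "- r"] assms by simp
  also have "\<dots> \<longleftrightarrow> lt i g (smul (- inverse c) r)" using assms by simp
  finally show ?thesis .
qed

lemma finite_max:
  assumes "finite X" "X \<noteq> {}"
  shows "\<exists>m\<in>X. \<forall>x\<in>X. x = m \<or> lt i x m"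
  using assms
proof (induction X rule: finite_ne_induct)
  case (singleton x) then show ?case by auto
next
  case (insert x F)
  then obtain m where m: "m \<in> F" "\<forall>x\<in>F. x = m \<or> lt i x m" by blast
  show ?case
  proof (cases "lt i m x")
    case True
    have "\<forall>y\<in>insert x F. y = x \<or> lt i y x"
      using m True lt_trans[of i _ m x] by auto
    then show ?thesis by blast
  next
    case False
    then have "x = m \<or> lt i x m" using lt_total[of x m i] by auto
    then show ?thesis using m by auto
  qed
qed

lemma finite_min:
  assumes "finite X" "X \<noteq> {}"
  shows "\<exists>m\<in>X. \<forall>x\<in>X. x = m \<or> lt i m x"
  using assms
proof (induction X rule: finite_ne_induct)
  case (singleton x) then show ?case by auto
next
  case (insert x F)
  then obtain m where m: "m \<in> F" "\<forall>x\<in>F. x = m \<or> lt i m x" by blast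
  show ?case
  proof (cases "lt i x m")
    case True
    have "\<forall>y\<in>insert x F. y = x \<or> lt i x y"
      using m True lt_trans[of i x m] by auto
    then show ?thesis by blast
  next
    case False
    then have "x = m \<or> lt i m x" using lt_total[of x m i] by auto
    then show ?thesis using m by auto
  qed
qed

lemma indep_sets:
  assumes J: "finite J"
    and H: "\<And>i. i \<in> J \<Longrightarrow> finite (Lo i) \<and> finite (Up i) \<and> (\<forall>l\<in>Lo i. \<forall>u\<in>Up i. lt i l u)"
  shows "\<exists>z. \<forall>i\<in>J. (\<forall>l\<in>Lo i. lt i l z) \<and> (\<forall>u\<in>Up i. lt i z u)"
proof -
  define a where "a i = (if i \<in> J \<and> Lo i \<noteq> {} then Some (SOME m. m \<in> Lo i \<and> (\<forall>x\<in>Lo i. x = m \<or> lt i x m)) else None)" for i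
  define b where "b i = (if i \<in> J \<and> Up i \<noteq> {} then Some (SOME m. m \<in> Up i \<and> (\<forall>x\<in>Up i. x = m \<or> lt i m x)) else None)" for i
  have aP: "a i = Some m \<Longrightarrow> m \<in> Lo i \<and> (\<forall>x\<in>Lo i. x = m \<or> lt i x m)" for i m
  proof -
    assume "a i = Some m"
    then have "i \<in> J" "Lo i \<noteq> {}" and m: "m = (SOME m. m \<in> Lo i \<and> (\<forall>x\<in>Lo i. x = m \<or> lt i x m))"
      unfolding a_def by (auto split: if_splits)
    have ex: "\<exists>m. m \<in> Lo i \<and> (\<forall>x\<in>Lo i. x = m \<or> lt i x m)" using finite_max[of "Lo i" i] H[of i] \<open>i \<in> J\<close> \<open>Lo i \<noteq> {}\<close> by blast
    show ?thesis unfolding m by (rule someI_ex[OF ex])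
  qed
  have bP: "b i = Some m \<Longrightarrow> m \<in> Up i \<and> (\<forall>x\<in>Up i. x = m \<or> lt i m x)" for i m
  proof -
    assume "b i = Some m"
    then have "i \<in> J" "Up i \<noteq> {}" and m: "m = (SOME m. m \<in> Up i \<and> (\<forall>x\<in>Up i. x = m \<or> lt i m x))"
      unfolding b_def by (auto split: if_splits)
    have ex: "\<exists>m. m \<in> Up i \<and> (\<forall>x\<in>Up i. x = m \<or> lt i m x)" using finite_min[of "Up i" i] H[of i] \<open>i \<in> J\<close> \<open>Up i \<noteq> {}\<close> by blast
    show ?thesis unfolding m by (rule someI_ex[OF ex])
  qed
  have hyp: "\<And>k a' b'. k \<in> J \<Longrightarrow> a k = Some a' \<Longrightarrow> b k = Some b' \<Longrightarrow> lt k a' b'"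
  proof -
    fix k a' b' assume k: "k \<in> J" and ak: "a k = Some a'" and bk: "b k = Some b'"
    have "a' \<in> Lo k" using aP[OF ak] by simp
    moreover have "b' \<in> Up k" using bP[OF bk] by simp
    ultimately show "lt k a' b'" using H[OF k] by simp
  qed
  obtain z where z: "\<forall>k\<in>J. (case a k of None \<Rightarrow> True | Some a' \<Rightarrow> lt k a' z) \<and>
                    (case b k of None \<Rightarrow> True | Some b' \<Rightarrow> lt k z b')"
  proof -
    have "\<exists>z. \<forall>k\<in>J. (case a k of None \<Rightarrow> True | Some a' \<Rightarrow> lt k a' z) \<and>
                    (case b k of None \<Rightarrow> True | Some b' \<Rightarrow> lt k z b')"
      by (rule indep[unfolded independent_ordering_def, rule_format, of J a b]) (use J hyp in auto)
    then show ?thesis using that by (elim exE) simp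
  qed
  have "(\<forall>l\<in>Lo i. lt i l z) \<and> (\<forall>u\<in>Up i. lt i z u)" if i: "i \<in> J" for i
  proof safe
    fix l assume l: "l \<in> Lo i"
    then have "Lo i \<noteq> {}" by auto
    then obtain m where am: "a i = Some m" using i by (simp add: a_def)
    then have "lt i m z" using z i by fastforce
    then show "lt i l z" using aP[OF am] l lt_trans[of i l m z] by auto
  next
    fix u assume u: "u \<in> Up i"
    then have "Up i \<noteq> {}" by auto
    then obtain m where bm: "b i = Some m" using i by (simp add: b_def)
    then have "lt i z m" using z i by fastforce
    then show "lt i z u" using bP[OF bm] u lt_trans[of i z m u] by auto
  qed
  then show ?thesis by (intro exI[of _ z]) auto
qed

end

lemma pair_lit_cases:
  "l \<in> set (pair_lit y l1 l2) \<Longrightarrow> \<exists>i t1 t2. l1 = LLt i t1 \<and> l2 = LLt i t2 \<and> 0 < coef y t1 \<and> coef y t2 < 0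
      \<and> l = LLt i (Plus (bnd y t2) (Scal (-1) (bnd y t1)))"
  by (induction y l1 l2 rule: pair_lit.induct) (auto split: if_splits)

lemma mem_pairs: "l \<in> set (pairs y C) \<longleftrightarrow> (\<exists>l1\<in>set C. \<exists>l2\<in>set C. l \<in> set (pair_lit y l1 l2))"
  unfolding pairs_def by auto

lemma in_pairs:
  assumes "LLt i t1 \<in> set C" "LLt i t2 \<in> set C" "0 < coef y t1" "coef y t2 < 0"
  shows "LLt i (Plus (bnd y t2) (Scal (-1) (bnd y t1))) \<in> set (pairs y C)"
  unfolding mem_pairs using assms by (intro bexI[of _ "LLt i t1"] bexI[of _ "LLt i t2"]) auto

primrec lidx :: "'i \<Rightarrow> ('c, 'i, 'g) lit \<Rightarrow> 'i" where
  "lidx d (LEq t) = d" | "lidx d (LNeq t) = d" | "lidx d (LLt i t) = i"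

definition Pd :: "'g set \<Rightarrow> ('c, 'i, 'g) lit list list \<Rightarrow> bool" where
  "Pd S D \<longleftrightarrow> (\<forall>C\<in>set D. \<forall>l\<in>set C. lparams l \<subseteq> S)"

lemma Pd_conj: "Pd S D1 \<Longrightarrow> Pd S D2 \<Longrightarrow> Pd S (conj_dnf D1 D2)"
  unfolding Pd_def conj_dnf_def by auto

lemma Pd_neg_lit: "lparams l \<subseteq> S \<Longrightarrow> Pd S (neg_lit l)"
  unfolding Pd_def by (cases l) auto

lemma Pd_neg_conj: "\<forall>l\<in>set C. lparams l \<subseteq> S \<Longrightarrow> Pd S (neg_conj C)"
  using Pd_neg_lit unfolding Pd_def neg_conj_def by fastforce

lemma Pd_neg: "Pd S D \<Longrightarrow> Pd S (neg_dnf D)"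
proof (induction D)
  case Nil then show ?case by (simp add: Pd_def neg_dnf_def)
next
  case (Cons C D)
  then have "Pd S (neg_dnf D)" "\<forall>l\<in>set C. lparams l \<subseteq> S" by (auto simp: Pd_def)
  have "Pd S (conj_dnf (neg_conj C) (neg_dnf D))" by (rule Pd_conj[OF Pd_neg_conj]) fact+
  then show ?case by (simp add: neg_dnf_def)
qed

context tmodel
begin

lemma dnf_conj: "dnf smul lt v (conj_dnf D1 D2) \<longleftrightarrow> dnf smul lt v D1 \<and> dnf smul lt v D2"
  unfolding dnf_def conj_dnf_def by fastforce

lemma dnf_neg_lit: "dnf smul lt v (neg_lit l) \<longleftrightarrow> \<not> holds smul lt v l"
proof (cases l)
  case (LLt i t)
  have "\<not> lt i 0 x \<longleftrightarrow> x = 0 \<or> lt i 0 (- x)" for x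
  proof -
    have "lt i 0 (- x) \<longleftrightarrow> lt i x 0" using lt_neg[of i x 0] by simp
    then show ?thesis using lt_total[of x 0 i] lt_asym[of i x 0] by auto
  qed
  then show ?thesis using LLt by (simp add: dnf_def)
qed (auto simp: dnf_def)

lemma dnf_neg_conj: "dnf smul lt v (neg_conj C) \<longleftrightarrow> \<not> (\<forall>l\<in>set C. holds smul lt v l)"
  using dnf_neg_lit unfolding neg_conj_def dnf_def by fastforce

lemma dnf_neg: "dnf smul lt v (neg_dnf D) \<longleftrightarrow> \<not> dnf smul lt v D"
proof (induction D)
  case Nil then show ?case by (simp add: dnf_def neg_dnf_def)
next
  case (Cons C D)
  have "dnf smul lt v (neg_dnf (C # D)) = (dnf smul lt v (neg_conj C) \<and> dnf smul lt v (neg_dnf D))"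
    by (simp add: neg_dnf_def dnf_conj)
  also have "\<dots> = (\<not> (\<forall>l\<in>set C. holds smul lt v l) \<and> \<not> dnf smul lt v D)"
    using Cons dnf_neg_conj by simp
  finally show ?case by (auto simp: dnf_def)
qed

lemma eval_upd: "eval smul (v(y := g)) t = smul (coef y t) g + eval smul v (subst y Zero t)"
  using eval_lin[of "v(y := g)" t y] by (simp add: eval_subst)

lemma holds_coef0:
  assumes "coef y (lterm l) = 0"
  shows "holds smul lt (v(y := g)) l = holds smul lt v (lmap (subst y Zero) l)"
proof -
  have "eval smul (v(y := g)) (lterm l) = eval smul v (subst y Zero (lterm l))"
    using eval_upd[of v y g "lterm l"] assms by simp
  then show ?thesis by (cases l) auto
qed

lemma find_SomeD': "find P xs = Some x \<Longrightarrow> x \<in> set xs \<and> P x"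
  by (induction xs) (auto split: if_splits)

lemma elim_some:
  assumes Some: "find (solv y) C = Some l0"
  shows "(\<exists>g. \<forall>l\<in>set C. holds smul lt (v(y := g)) l) \<longleftrightarrow> (\<forall>l\<in>set (elim y C). holds smul lt v l)"
proof -
  have l0: "l0 \<in> set C" "solv y l0" using find_SomeD'[OF Some] by auto
  obtain t0 where t0: "l0 = LEq t0" "coef y t0 \<noteq> 0" using l0(2) unfolding solv_def by (cases l0) auto
  have el: "elim y C = map (lmap (subst y (bnd y t0))) C"
    using Some t0 by (simp add: elim_def)
  show ?thesis
  proof
    assume "\<exists>g. \<forall>l\<in>set C. holds smul lt (v(y := g)) l"
    then obtain g where g: "\<forall>l\<in>set C. holds smul lt (v(y := g)) l" by blast
    have "holds smul lt (v(y := g)) (LEq t0)" using g l0(1) unfolding t0(1) by blast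
    then have "eval smul (v(y := g)) t0 = 0" by simp
    then have "smul (coef y t0) g + eval smul v (subst y Zero t0) = 0" by (simp only: eval_upd)
    then have "g = smul (- inverse (coef y t0)) (eval smul v (subst y Zero t0))" using solve_eq[OF t0(2)] by blast
    then have geq: "g = eval smul v (bnd y t0)" by (simp add: bnd_def)
    show "\<forall>l\<in>set (elim y C). holds smul lt v l"
    proof
      fix l assume "l \<in> set (elim y C)"
      then obtain l' where "l' \<in> set C" "l = lmap (subst y (bnd y t0)) l'" unfolding el by auto
      then show "holds smul lt v l" using g holds_lmap_subst[of v y "bnd y t0" l'] geq by simp
    qed
  next
    assume E: "\<forall>l\<in>set (elim y C). holds smul lt v l"
    have "\<forall>l\<in>set C. holds smul lt (v(y := eval smul v (bnd y t0))) l"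
    proof
      fix l assume "l \<in> set C"
      then have "holds smul lt v (lmap (subst y (bnd y t0)) l)" using E unfolding el by auto
      then show "holds smul lt (v(y := eval smul v (bnd y t0))) l" by (simp only: holds_lmap_subst)
    qed
    then show "\<exists>g. \<forall>l\<in>set C. holds smul lt (v(y := g)) l" by blast
  qed
qed

lemma elim_none_fwd:
  assumes None: "find (solv y) C = None"
    and g: "\<forall>l\<in>set C. holds smul lt (v(y := g)) l"
  shows "\<forall>l\<in>set (elim y C). holds smul lt v l"
proof -
  from None have nos: "\<forall>l\<in>set C. \<not> solv y l" by (simp add: find_None_iff)
  have el: "elim y C = map (lmap (subst y Zero)) (filter (\<lambda>l. coef y (lterm l) = 0) C) @ pairs y C"
    using None by (simp add: elim_def)
  define r where "r t = eval smul v (subst y Zero t)" for t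
  have bndv: "eval smul v (bnd y t) = smul (- inverse (coef y t)) (r t)" for t
    by (simp add: bnd_def r_def)
  show ?thesis
  proof
    fix l assume "l \<in> set (elim y C)"
    then consider (a) l' where "l' \<in> set C" "coef y (lterm l') = 0" "l = lmap (subst y Zero) l'"
      | (b) "l \<in> set (pairs y C)" unfolding el by auto
    then show "holds smul lt v l"
    proof cases
      case a
      then show ?thesis using g holds_coef0[of y l' v g] by auto
    next
      case b
      then obtain l1 l2 where "l1 \<in> set C" "l2 \<in> set C" "l \<in> set (pair_lit y l1 l2)"
        unfolding mem_pairs by blast
      then obtain i t1 t2 where *: "LLt i t1 \<in> set C" "LLt i t2 \<in> set C" "0 < coef y t1" "coef y t2 < 0"
        "l = LLt i (Plus (bnd y t2) (Scal (-1) (bnd y t1)))"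
        using pair_lit_cases by blast
      have "lt i 0 (smul (coef y t1) g + r t1)" using g *(1) by (fastforce simp: eval_upd r_def)
      then have 1: "lt i (eval smul v (bnd y t1)) g" using solve_lt_pos[OF *(3)] by (simp add: bndv)
      have "lt i 0 (smul (coef y t2) g + r t2)" using g *(2) by (fastforce simp: eval_upd r_def)
      then have 2: "lt i g (eval smul v (bnd y t2))" using solve_lt_neg[OF *(4)] by (simp add: bndv)
      have "lt i (eval smul v (bnd y t1)) (eval smul v (bnd y t2))" using lt_trans[OF 1 2] .
      then show ?thesis using *(5) lt_sub by simp
    qed
  qed
qed

lemma elim_none_bwd:
  assumes None: "find (solv y) C = None"
    and E: "\<forall>l\<in>set (elim y C). holds smul lt v l"
  shows "\<exists>g. \<forall>l\<in>set C. holds smul lt (v(y := g)) l"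
proof -
  from None have nos: "\<forall>l\<in>set C. \<not> solv y l" by (simp add: find_None_iff)
  have el: "elim y C = map (lmap (subst y Zero)) (filter (\<lambda>l. coef y (lterm l) = 0) C) @ pairs y C"
    using None by (simp add: elim_def)
  define r where "r t = eval smul v (subst y Zero t)" for t
  have bndv: "eval smul v (bnd y t) = smul (- inverse (coef y t)) (r t)" for t
    by (simp add: bnd_def r_def)
  define i0 :: 'i where "i0 = undefined"
  define Lo where "Lo i = {eval smul v (bnd y t) | t. LLt i t \<in> set C \<and> 0 < coef y t}" for i
  define Up0 where "Up0 i = {eval smul v (bnd y t) | t. LLt i t \<in> set C \<and> coef y t < 0}" for i
  define Bad where "Bad = {eval smul v (bnd y t) | t. LNeq t \<in> set C \<and> coef y t \<noteq> 0}"
  define Up where "Up i = Up0 i \<union> (if i = i0 then {p \<in> Bad. \<forall>l\<in>Lo i. lt i l p} else {})" for i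
  define J where "J = insert i0 (lidx i0 ` set C)"
  have finJ: "finite J" unfolding J_def by simp
  have fin: "finite X" if "X \<subseteq> (\<lambda>l. eval smul v (bnd y (lterm l))) ` set C" for X
    using finite_subset[OF that] by simp
  have finLo: "finite (Lo i)" for i
    by (rule fin) (auto simp: Lo_def image_def intro!: bexI[of _ "LLt i _"])
  have finUp0: "finite (Up0 i)" for i
    by (rule fin) (auto simp: Up0_def image_def intro!: bexI[of _ "LLt i _"])
  have finBad: "finite Bad"
    by (rule fin) (auto simp: Bad_def image_def intro!: bexI[of _ "LNeq _"])
  have finUp: "finite (Up i)" for i
    using finUp0[of i] finBad by (simp add: Up_def)
  have LU: "lt i l u" if "l \<in> Lo i" "u \<in> Up i" for i l u
  proof -
    from that(1) obtain t1 where t1: "l = eval smul v (bnd y t1)" "LLt i t1 \<in> set C" "0 < coef y t1"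
      unfolding Lo_def by blast
    show ?thesis
    proof (cases "u \<in> Up0 i")
      case True
      then obtain t2 where t2: "u = eval smul v (bnd y t2)" "LLt i t2 \<in> set C" "coef y t2 < 0"
        unfolding Up0_def by blast
      have "LLt i (Plus (bnd y t2) (Scal (-1) (bnd y t1))) \<in> set (elim y C)"
        unfolding el using in_pairs[OF t1(2) t2(2) t1(3) t2(3)] by simp
      then have "holds smul lt v (LLt i (Plus (bnd y t2) (Scal (-1) (bnd y t1))))" using E by blast
      then show ?thesis using t1 t2 lt_sub by simp
    next
      case False
      then show ?thesis using that unfolding Up_def by (auto split: if_splits)
    qed
  qed
  obtain z where z: "\<forall>i\<in>J. (\<forall>l\<in>Lo i. lt i l z) \<and> (\<forall>u\<in>Up i. lt i z u)"
    using indep_sets[OF finJ, of Lo Up] finLo finUp LU by blast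
  have "holds smul lt (v(y := z)) l" if l: "l \<in> set C" for l
  proof (cases "coef y (lterm l) = 0")
    case True
    then have "lmap (subst y Zero) l \<in> set (elim y C)" unfolding el using l by auto
    then show ?thesis using E holds_coef0[OF True, of v z] by auto
  next
    case False
    show ?thesis
    proof (cases l)
      case (LEq t)
      then show ?thesis using nos l False by (auto simp: solv_def)
    next
      case (LNeq t)
      define p where "p = eval smul v (bnd y t)"
      have pB: "p \<in> Bad" unfolding Bad_def p_def using LNeq l False by auto
      have i0J: "i0 \<in> J" unfolding J_def by simp
      have "z \<noteq> p"
      proof (cases "\<forall>l\<in>Lo i0. lt i0 l p")
        case True
        then have "p \<in> Up i0" using pB unfolding Up_def by simp
        then have "lt i0 z p" using z i0J by blast
        then show ?thesis by auto
      next
        case False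
        then obtain l' where "l' \<in> Lo i0" "\<not> lt i0 l' p" by blast
        moreover have "lt i0 l' z" using z i0J \<open>l' \<in> Lo i0\<close> by blast
        ultimately show ?thesis by auto
      qed
      then have "smul (coef y t) z + r t \<noteq> 0"
        using solve_eq[of "coef y t" z "r t"] False LNeq by (simp add: p_def bndv)
      then show ?thesis using LNeq by (simp add: eval_upd r_def)
    next
      case (LLt i t)
      have iJ: "i \<in> J" unfolding J_def using l LLt by (auto intro: image_eqI[of _ _ l])
      show ?thesis
      proof (cases "0 < coef y t")
        case True
        have "eval smul v (bnd y t) \<in> Lo i" unfolding Lo_def using LLt l True by auto
        then have "lt i (eval smul v (bnd y t)) z" using z iJ by blast
        then have "lt i 0 (smul (coef y t) z + r t)" using solve_lt_pos[OF True] by (simp add: bndv)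
        then show ?thesis using LLt by (simp add: eval_upd r_def)
      next
        case False': False
        then have neg: "coef y t < 0" using False LLt by auto
        have "eval smul v (bnd y t) \<in> Up i" unfolding Up_def Up0_def using LLt l neg by auto
        then have "lt i z (eval smul v (bnd y t))" using z iJ by blast
        then have "lt i 0 (smul (coef y t) z + r t)" using solve_lt_neg[OF neg] by (simp add: bndv)
        then show ?thesis using LLt by (simp add: eval_upd r_def)
      qed
    qed
  qed
  then show ?thesis by blast
qed

lemma elim_correct:
  "(\<exists>g. \<forall>l\<in>set C. holds smul lt (v(y := g)) l) \<longleftrightarrow> (\<forall>l\<in>set (elim y C). holds smul lt v l)"
proof (cases "find (solv y) C")
  case None
  show ?thesis
  proof
    assume "\<exists>g. \<forall>l\<in>set C. holds smul lt (v(y := g)) l"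
    then obtain g where "\<forall>l\<in>set C. holds smul lt (v(y := g)) l" by blast
    then show "\<forall>l\<in>set (elim y C). holds smul lt v l" by (rule elim_none_fwd[OF None])
  next
    assume "\<forall>l\<in>set (elim y C). holds smul lt v l"
    then show "\<exists>g. \<forall>l\<in>set C. holds smul lt (v(y := g)) l" by (rule elim_none_bwd[OF None])
  qed
next
  case (Some l0)
  then show ?thesis by (rule elim_some)
qed

lemma dnf_ex: "(\<exists>g. dnf smul lt (v(y := g)) D) \<longleftrightarrow> dnf smul lt v (map (elim y) D)"
proof
  assume "\<exists>g. dnf smul lt (v(y := g)) D"
  then obtain g C where "C \<in> set D" "\<forall>l\<in>set C. holds smul lt (v(y := g)) l" unfolding dnf_def by blast
  then show "dnf smul lt v (map (elim y) D)"
    using elim_correct[of C v y] unfolding dnf_def by auto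
next
  assume "dnf smul lt v (map (elim y) D)"
  then obtain C where C: "C \<in> set D" "\<forall>l\<in>set (elim y C). holds smul lt v l" unfolding dnf_def by auto
  then obtain g where "\<forall>l\<in>set C. holds smul lt (v(y := g)) l" using elim_correct[of C v y] by blast
  then show "\<exists>g. dnf smul lt (v(y := g)) D" using C(1) unfolding dnf_def by blast
qed

theorem qe: "\<exists>D. Pd (params \<phi>) D \<and> (\<forall>v. sat smul lt v \<phi> \<longleftrightarrow> dnf smul lt v D)"
proof (induction \<phi>)
  case (Eq s t)
  show ?case
    by (rule exI[of _ "[[LEq (Plus s (Scal (-1) t))]]"]) (auto simp: Pd_def dnf_def)
next
  case (Less i s t)
  show ?case
    by (rule exI[of _ "[[LLt i (Plus t (Scal (-1) s))]]"]) (auto simp: Pd_def dnf_def lt_sub[of i "eval smul _ s"])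
next
  case (Neg \<phi>)
  then obtain D where "Pd (params \<phi>) D" "\<forall>v. sat smul lt v \<phi> \<longleftrightarrow> dnf smul lt v D" by blast
  then show ?case by (intro exI[of _ "neg_dnf D"]) (simp add: Pd_neg dnf_neg)
next
  case (Conj \<phi> \<psi>)
  then obtain D1 D2 where "Pd (params \<phi>) D1" "\<forall>v. sat smul lt v \<phi> \<longleftrightarrow> dnf smul lt v D1"
    "Pd (params \<psi>) D2" "\<forall>v. sat smul lt v \<psi> \<longleftrightarrow> dnf smul lt v D2" by blast
  moreover have "Pd (params \<phi> \<union> params \<psi>) D1" "Pd (params \<phi> \<union> params \<psi>) D2"
    using calculation unfolding Pd_def by blast+
  ultimately show ?case by (intro exI[of _ "conj_dnf D1 D2"]) (simp add: Pd_conj dnf_conj)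
next
  case (Ex x \<phi>)
  then obtain D where D: "Pd (params \<phi>) D" "\<forall>v. sat smul lt v \<phi> \<longleftrightarrow> dnf smul lt v D" by blast
  have "Pd (params \<phi>) (map (elim x) D)"
    using D(1) params_elim unfolding Pd_def by fastforce
  then show ?case using D(2) dnf_ex[of _ x D] by (intro exI[of _ "map (elim x) D"]) simp
qed

end

lemma tuple_in_inf:
  fixes X :: "'o::linorder set" and m :: nat
  assumes "infinite X"
  shows "\<exists>L. (\<forall>j<m. L j \<in> X) \<and> (\<forall>p q. p < q \<longrightarrow> q < m \<longrightarrow> L p < L q)"
proof -
  obtain F where F: "F \<subseteq> X" "finite F" "card F = m"
    using infinite_arbitrarily_large[OF assms] by blast
  obtain xs where xs: "sorted_wrt (<) xs" "set xs = F" "length xs = m"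
    using finite_set_strict_sorted[OF F(2)] F(3) by blast
  have "(\<forall>j<m. xs ! j \<in> X)" using xs F(1) nth_mem by fastforce
  moreover have "\<forall>p q. p < q \<longrightarrow> q < m \<longrightarrow> xs ! p < xs ! q"
    using sorted_wrt_nth_less[OF xs(1)] xs(3) by auto
  ultimately show ?thesis by blast
qed

lemma incr_comp:
  assumes "incr_in X K U" "\<forall>p<k. \<pi> p < K" "\<forall>p q. p < q \<longrightarrow> q < k \<longrightarrow> \<pi> p < \<pi> q"
  shows "incr_in X k (U \<circ> \<pi>)"
  using assms unfolding incr_in_def by auto

lemma incr_inj:
  assumes "incr_in X K U" "r1 < K" "r2 < K" "U r1 = U r2"
  shows "r1 = r2"
proof (rule ccontr)
  assume "r1 \<noteq> r2"
  then have "r1 < r2 \<or> r2 < r1" by arith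
  then show False using assms unfolding incr_in_def by (metis less_irrefl)
qed

lemma incr_avoid:
  assumes "incr_in UNIV k T" "\<forall>p<k. T p \<noteq> c"
  shows "incr_in (UNIV - {c}) k T"
  using assms unfolding incr_in_def by auto

lemma incr_mono_le:
  assumes "incr_in X k S" "p \<le> q" "q < k"
  shows "S p \<le> S q"
  using assms unfolding incr_in_def by (cases "p = q") (auto intro: less_imp_le)

definition ins :: "(nat \<Rightarrow> 'o) \<Rightarrow> nat \<Rightarrow> (nat \<Rightarrow> 'o) \<Rightarrow> nat \<Rightarrow> nat \<Rightarrow> 'o" where
  "ins S q B M r = (if r < q then S r else if r < q + M then B (r - q) else S (r - M))"

lemma ins_incr:
  fixes S :: "nat \<Rightarrow> 'o::linorder"
  assumes S: "incr_in UNIV k S" and q: "q \<le> k"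
    and B: "\<forall>p q. p < q \<longrightarrow> q < M \<longrightarrow> B p < B q"
    and Blo: "\<forall>j<M. \<forall>p<q. S p < B j"
    and Bhi: "\<forall>j<M. \<forall>p. q \<le> p \<longrightarrow> p < k \<longrightarrow> B j < S p"
  shows "incr_in UNIV (k + M) (ins S q B M)"
proof -
  have Sm: "\<forall>p r. p < r \<longrightarrow> r < k \<longrightarrow> S p < S r" using S unfolding incr_in_def by auto
  have "ins S q B M r1 < ins S q B M r2" if "r1 < r2" "r2 < k + M" for r1 r2
  proof -
    consider "r2 < q" | "q \<le> r2" "r2 < q + M" | "q + M \<le> r2" by arith
    then show ?thesis
    proof cases
      case 1 then show ?thesis using that Sm q by (simp add: ins_def)
    next
      case 2
      show ?thesis
      proof (cases "r1 < q")
        case True then show ?thesis using 2 that Blo by (simp add: ins_def)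
      next
        case False then show ?thesis using 2 that B by (simp add: ins_def)
      qed
    next
      case 3
      show ?thesis
      proof (cases "r1 < q")
        case True then show ?thesis using 3 that Sm by (simp add: ins_def)
      next
        case False
        show ?thesis
        proof (cases "r1 < q + M")
          case True then show ?thesis using 3 that False Bhi by (simp add: ins_def)
        next
          case False': False
          then show ?thesis using 3 that Sm by (simp add: ins_def)
        qed
      qed
    qed
  qed
  then show ?thesis unfolding incr_in_def by auto
qed

lemma gap_lo:
  fixes S :: "nat \<Rightarrow> 'o::linorder"
  assumes S: "incr_in UNIV k S" and p0: "p0 < k" and inf: "infinite {..<S p0}"
  shows "\<exists>q1\<le>p0. infinite {x. (\<forall>p<q1. S p < x) \<and> x < S q1}"
proof (rule ccontr)
  assume "\<not> ?thesis"
  then have fin: "\<forall>q\<le>p0. finite {x. (\<forall>p<q. S p < x) \<and> x < S q}" by auto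
  have "{..<S p0} \<subseteq> (\<Union>q\<in>{..p0}. {x. (\<forall>p<q. S p < x) \<and> x < S q}) \<union> S ` {..<k}"
  proof
    fix x assume x: "x \<in> {..<S p0}"
    show "x \<in> (\<Union>q\<in>{..p0}. {x. (\<forall>p<q. S p < x) \<and> x < S q}) \<union> S ` {..<k}"
    proof (cases "x \<in> S ` {..<k}")
      case True then show ?thesis by blast
    next
      case False
      define q where "q = (LEAST q. x < S q)"
      have xq: "x < S q" unfolding q_def using x by (auto intro: LeastI)
      have qp: "q \<le> p0" unfolding q_def using x by (auto intro: Least_le)
      have "\<forall>p<q. S p < x"
      proof (intro allI impI)
        fix p assume "p < q"
        then have "\<not> x < S p" unfolding q_def by (rule not_less_Least)
        moreover have "S p \<noteq> x" using False \<open>p < q\<close> qp p0 by auto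
        ultimately show "S p < x" by auto
      qed
      then show ?thesis using xq qp by blast
    qed
  qed
  moreover have "finite ((\<Union>q\<in>{..p0}. {x. (\<forall>p<q. S p < x) \<and> x < S q}) \<union> S ` {..<k})"
    using fin by auto
  ultimately show False using inf finite_subset by blast
qed

lemma gap_hi:
  fixes S :: "nat \<Rightarrow> 'o::linorder"
  assumes S: "incr_in UNIV k S" and p0: "p0 < k" and inf: "infinite {S p0<..}"
  shows "\<exists>q2. p0 \<le> q2 \<and> q2 < k \<and> infinite {x. S q2 < x \<and> (\<forall>p. q2 < p \<longrightarrow> p < k \<longrightarrow> x < S p)}"
proof (rule ccontr)
  assume "\<not> ?thesis"
  then have fin: "\<forall>q. p0 \<le> q \<and> q < k \<longrightarrow> finite {x. S q < x \<and> (\<forall>p. q < p \<longrightarrow> p < k \<longrightarrow> x < S p)}" by auto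
  let ?G = "\<lambda>q. {x. S q < x \<and> (\<forall>p. q < p \<longrightarrow> p < k \<longrightarrow> x < S p)}"
  have "{S p0<..} \<subseteq> (\<Union>q\<in>{p0..<k}. ?G q) \<union> S ` {..<k}"
  proof
    fix x assume x: "x \<in> {S p0<..}"
    show "x \<in> (\<Union>q\<in>{p0..<k}. ?G q) \<union> S ` {..<k}"
    proof (cases "x \<in> S ` {..<k}")
      case True then show ?thesis by blast
    next
      case False
      define P where "P q \<longleftrightarrow> q < k \<and> S q < x" for q
      define q where "q = (GREATEST q. P q)"
      have P0: "P p0" using x p0 by (simp add: P_def)
      have bnd: "\<And>y. P y \<Longrightarrow> y \<le> k" by (auto simp: P_def)
      have Pq: "P q" unfolding q_def by (rule GreatestI_nat[of P p0 k, OF P0 bnd])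
      have qp: "p0 \<le> q" unfolding q_def by (rule Greatest_le_nat[of P p0 k, OF P0 bnd])
      have "\<forall>p. q < p \<longrightarrow> p < k \<longrightarrow> x < S p"
      proof (intro allI impI)
        fix p assume "q < p" "p < k"
        have "\<not> P p"
        proof
          assume "P p"
          then have "p \<le> q" unfolding q_def by (rule Greatest_le_nat[of P p k, OF _ bnd])
          then show False using \<open>q < p\<close> by simp
        qed
        then have "\<not> S p < x" using \<open>p < k\<close> by (simp add: P_def)
        moreover have "S p \<noteq> x" using False \<open>p < k\<close> by auto
        ultimately show "x < S p" by auto
      qed
      then show ?thesis using Pq qp unfolding P_def by auto
    qed
  qed
  moreover have "finite ((\<Union>q\<in>{p0..<k}. ?G q) \<union> S ` {..<k})"
    using fin by auto
  ultimately show False using inf finite_subset by blast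
qed

definition ren :: "nat \<Rightarrow> nat \<Rightarrow> nat \<Rightarrow> (nat \<Rightarrow> nat) \<Rightarrow> nat \<Rightarrow> nat" where
  "ren n k K \<pi> x = (if x < k * n then \<pi> (x div n) * n + x mod n else x + K * n)"

lemma seq_ren:
  assumes "\<forall>p<k. \<pi> p < K"
  shows "seq_asg n a K U (ren n k K \<pi> x) = seq_asg n a k (U \<circ> \<pi>) x"
proof (cases "x < k * n")
  case True
  then have n: "0 < n" by (cases n) auto
  define p where "p = x div n"
  define q where "q = x mod n"
  have pk: "p < k" unfolding p_def using True n by (simp add: div_less_iff_less_mult mult.commute)
  have qn: "q < n" unfolding q_def using n by simp
  have piK: "\<pi> p < K" using assms pk by blast
  have "\<pi> p * n + q < K * n"
  proof -
    have "\<pi> p * n + q < \<pi> p * n + n" using qn by simp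
    also have "\<dots> = (\<pi> p + 1) * n" by simp
    also have "\<dots> \<le> K * n" using piK by (intro mult_right_mono) auto
    finally show ?thesis .
  qed
  moreover have "(\<pi> p * n + q) div n = \<pi> p" using qn by simp
  moreover have "(\<pi> p * n + q) mod n = q" using qn by simp
  ultimately show ?thesis using True unfolding seq_asg_def ren_def p_def q_def by simp
next
  case False
  then show ?thesis unfolding seq_asg_def ren_def by simp
qed

lemma seq_cong:
  assumes "\<forall>p<k. S p = S' p"
  shows "seq_asg n a k S = seq_asg n a k S'"
proof
  fix x
  show "seq_asg n a k S x = seq_asg n a k S' x"
  proof (cases "x < k * n")
    case True
    then have "x div n < k" by (cases n) (auto simp: div_less_iff_less_mult mult.commute)
    then show ?thesis using assms True unfolding seq_asg_def by simp
  qed (simp add: seq_asg_def)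
qed

context tmodel
begin

lemma tri:
  assumes "lt i 0 d1 \<longleftrightarrow> lt i 0 d2" "d1 = 0 \<longleftrightarrow> d2 = 0"
  shows "(d1 = 0 \<and> d2 = 0) \<or> (lt i 0 d1 \<and> lt i 0 d2) \<or> (lt i 0 (- d1) \<and> lt i 0 (- d2))"
proof -
  have "lt i 0 (- d) \<longleftrightarrow> lt i d 0" for d using lt_neg[of i d 0] by simp
  then show ?thesis using assms lt_total[of d1 0 i] lt_total[of d2 0 i] by auto
qed

lemma eval_ren:
  assumes "\<forall>p<k. \<pi> p < K"
  shows "eval smul (seq_asg n a K U) (rename (ren n k K \<pi>) t) = eval smul (seq_asg n a k (U \<circ> \<pi>)) t"
proof -
  have "seq_asg n a K U \<circ> ren n k K \<pi> = seq_asg n a k (U \<circ> \<pi>)"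
  proof
    fix x show "(seq_asg n a K U \<circ> ren n k K \<pi>) x = seq_asg n a k (U \<circ> \<pi>) x"
      using seq_ren[OF assms, of n a U x] by (simp only: comp_apply)
  qed
  then show ?thesis by (simp add: eval_rename)
qed

lemma key:
  fixes S :: "nat \<Rightarrow> 'o::linorder"
  assumes ind0: "indiscernible smul lt n a UNIV {}"
    and S: "incr_in UNIV k S" and p0: "p0 < k" and Sc: "S p0 = c"
    and infL: "infinite {..<c}" and infR: "infinite {c<..}"
  shows "\<exists>T1 T2. incr_in (UNIV - {c}) k T1 \<and> incr_in (UNIV - {c}) k T2 \<and>
     ((eval smul (seq_asg n a k T1) t = eval smul (seq_asg n a k S) t \<and>
       eval smul (seq_asg n a k S) t = eval smul (seq_asg n a k T2) t) \<or>
      (lt i (eval smul (seq_asg n a k T1) t) (eval smul (seq_asg n a k S) t) \<and>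
       lt i (eval smul (seq_asg n a k S) t) (eval smul (seq_asg n a k T2) t)))"
proof -
  have Sm: "\<forall>p r. p < r \<longrightarrow> r < k \<longrightarrow> S p < S r" using S unfolding incr_in_def by auto
  obtain q1 where q1: "q1 \<le> p0" "infinite {x. (\<forall>p<q1. S p < x) \<and> x < S q1}"
    using gap_lo[OF S p0] infL Sc by auto
  obtain q2 where q2: "p0 \<le> q2" "q2 < k" "infinite {x. S q2 < x \<and> (\<forall>p. q2 < p \<longrightarrow> p < k \<longrightarrow> x < S p)}"
    using gap_hi[OF S p0] infR Sc by auto
  define M where "M = Suc q2 - q1"
  have M: "q1 + M = Suc q2" using q1 q2 unfolding M_def by simp
  obtain L where L: "\<forall>j<M. L j \<in> {x. (\<forall>p<q1. S p < x) \<and> x < S q1}"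
    "\<forall>p q. p < q \<longrightarrow> q < M \<longrightarrow> L p < L q"
    using tuple_in_inf[OF q1(2)] by blast
  obtain R where R: "\<forall>j<M. R j \<in> {x. S q2 < x \<and> (\<forall>p. q2 < p \<longrightarrow> p < k \<longrightarrow> x < S p)}"
    "\<forall>p q. p < q \<longrightarrow> q < M \<longrightarrow> R p < R q"
    using tuple_in_inf[OF q2(3)] by blast
  define U where "U = ins S q1 L M"
  define U' where "U' = ins S (Suc q2) R M"
  have U: "incr_in UNIV (k + M) U" unfolding U_def
  proof (rule ins_incr[OF S _ L(2)])
    show "q1 \<le> k" using q1 p0 by simp
    show "\<forall>j<M. \<forall>p<q1. S p < L j" using L(1) by auto
    show "\<forall>j<M. \<forall>p. q1 \<le> p \<longrightarrow> p < k \<longrightarrow> L j < S p"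
    proof (intro allI impI)
      fix j p assume "j < M" "q1 \<le> p" "p < k"
      then have "L j < S q1" using L(1) by auto
      also have "S q1 \<le> S p" using incr_mono_le[OF S \<open>q1 \<le> p\<close> \<open>p < k\<close>] .
      finally show "L j < S p" .
    qed
  qed
  have U': "incr_in UNIV (k + M) U'" unfolding U'_def
  proof (rule ins_incr[OF S _ R(2)])
    show "Suc q2 \<le> k" using q2 by simp
    show "\<forall>j<M. \<forall>p<Suc q2. S p < R j"
    proof (intro allI impI)
      fix j p assume "j < M" "p < Suc q2"
      have "S p \<le> S q2" using incr_mono_le[OF S _ q2(2)] \<open>p < Suc q2\<close> by simp
      also have "S q2 < R j" using R(1) \<open>j < M\<close> by auto
      finally show "S p < R j" .
    qed
    show "\<forall>j<M. \<forall>p. Suc q2 \<le> p \<longrightarrow> p < k \<longrightarrow> R j < S p" using R(1) by auto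
  qed
  define plo where "plo p = (if p \<le> q2 then p else p + M)" for p
  define phi where "phi p = (if p < q1 then p else p + M)" for p
  have plo_b: "\<forall>p<k. plo p < k + M" unfolding plo_def by auto
  have phi_b: "\<forall>p<k. phi p < k + M" unfolding phi_def by auto
  have plo_m: "\<forall>p q. p < q \<longrightarrow> q < k \<longrightarrow> plo p < plo q" unfolding plo_def by auto
  have phi_m: "\<forall>p q. p < q \<longrightarrow> q < k \<longrightarrow> phi p < phi q" unfolding phi_def by auto
  have Uhi: "\<forall>p<k. (U \<circ> phi) p = S p"
    unfolding U_def ins_def phi_def using M by auto
  have U'lo: "\<forall>p<k. (U' \<circ> plo) p = S p"
    unfolding U'_def ins_def plo_def using M by auto
  define T0 where "T0 = U \<circ> plo"
  define T2 where "T2 = U' \<circ> phi"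
  have T0: "incr_in (UNIV - {c}) k T0"
  proof (rule incr_avoid)
    show "incr_in UNIV k T0" unfolding T0_def by (rule incr_comp[OF U plo_b plo_m])
    show "\<forall>p<k. T0 p \<noteq> c"
    proof (intro allI impI notI)
      fix p assume p: "p < k" "T0 p = c"
      have "U (plo p) = U (phi p0)" using p Uhi p0 Sc unfolding T0_def by auto
      then have "plo p = phi p0" using incr_inj[OF U] plo_b phi_b p p0 by blast
      then show False using q1 q2 M unfolding plo_def phi_def by (auto split: if_splits)
    qed
  qed
  have T2: "incr_in (UNIV - {c}) k T2"
  proof (rule incr_avoid)
    show "incr_in UNIV k T2" unfolding T2_def by (rule incr_comp[OF U' phi_b phi_m])
    show "\<forall>p<k. T2 p \<noteq> c"
    proof (intro allI impI notI)
      fix p assume p: "p < k" "T2 p = c"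
      have "U' (phi p) = U' (plo p0)" using p U'lo p0 Sc unfolding T2_def by auto
      then have "phi p = plo p0" using incr_inj[OF U'] plo_b phi_b p p0 by blast
      then show False using q1 q2 M unfolding plo_def phi_def by (auto split: if_splits)
    qed
  qed
  define E where "E X = eval smul (seq_asg n a k X) (zpar t)" for X
  define \<kappa> where "\<kappa> = eval smul (\<lambda>_. 0) t"
  have F: "eval smul (seq_asg n a k X) t = E X + \<kappa>" for X
    unfolding E_def \<kappa>_def by (rule eval_zpar)
  define K where "K = k + M"
  define Dt where "Dt = Plus (rename (ren n k K phi) (zpar t)) (Scal (-1) (rename (ren n k K plo) (zpar t)))"
  have pD: "params_trm Dt = {}" unfolding Dt_def by simp
  have DU: "eval smul (seq_asg n a K U) Dt = E S - E T0"
  proof -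
    have "eval smul (seq_asg n a K U) Dt = E (U \<circ> phi) - E (U \<circ> plo)"
      unfolding Dt_def E_def K_def
      using eval_ren[OF phi_b, of n a U "zpar t"] eval_ren[OF plo_b, of n a U "zpar t"] by simp
    also have "seq_asg n a k (U \<circ> phi) = seq_asg n a k S" by (rule seq_cong[OF Uhi])
    then have "E (U \<circ> phi) = E S" unfolding E_def by simp
    finally show ?thesis unfolding T0_def .
  qed
  have DU': "eval smul (seq_asg n a K U') Dt = E T2 - E S"
  proof -
    have "eval smul (seq_asg n a K U') Dt = E (U' \<circ> phi) - E (U' \<circ> plo)"
      unfolding Dt_def E_def K_def
      using eval_ren[OF phi_b, of n a U' "zpar t"] eval_ren[OF plo_b, of n a U' "zpar t"] by simp
    also have "seq_asg n a k (U' \<circ> plo) = seq_asg n a k S" by (rule seq_cong[OF U'lo])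
    then have "E (U' \<circ> plo) = E S" unfolding E_def by simp
    finally show ?thesis unfolding T2_def .
  qed
  have UK: "incr_in UNIV K U" "incr_in UNIV K U'" using U U' unfolding K_def by auto
  have h1: "lt i 0 (E S - E T0) \<longleftrightarrow> lt i 0 (E T2 - E S)"
    using ind0[unfolded indiscernible_def, rule_format, of "Less i Zero Dt" K U U'] pD UK DU DU' by simp
  have h2: "E S - E T0 = 0 \<longleftrightarrow> E T2 - E S = 0"
    using ind0[unfolded indiscernible_def, rule_format, of "Eq Dt Zero" K U U'] pD UK DU DU' by simp
  have ltF: "lt i (E X + \<kappa>) (E Y + \<kappa>) \<longleftrightarrow> lt i 0 (E Y - E X)" for X Y
    using lt_add_iff[of i "E X" \<kappa> "E Y"] lt_sub[of i "E X" "E Y"] by simp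
  consider "E S - E T0 = 0 \<and> E T2 - E S = 0" | "lt i 0 (E S - E T0) \<and> lt i 0 (E T2 - E S)"
    | "lt i 0 (- (E S - E T0)) \<and> lt i 0 (- (E T2 - E S))"
    using tri[OF h1 h2] by blast
  then show ?thesis
  proof cases
    case 1
    then show ?thesis using T0 T2 F by (intro exI[of _ T0] exI[of _ T2]) simp
  next
    case 2
    then show ?thesis using T0 T2 by (intro exI[of _ T0] exI[of _ T2]) (simp add: F ltF)
  next
    case 3
    then have "lt i 0 (E T0 - E S)" "lt i 0 (E S - E T2)" by (simp_all add: minus_diff_eq)
    then show ?thesis using T0 T2 by (intro exI[of _ T2] exI[of _ T0]) (simp add: F ltF)
  qed
qed

end

context tmodel
begin

lemma lit_lt_const:
  fixes S T :: "nat \<Rightarrow> 'o::linorder"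
  assumes ind0: "indiscernible smul lt n a UNIV {}"
    and indA: "indiscernible smul lt n a (UNIV - {c}) A"
    and infL: "infinite {..<c}" and infR: "infinite {c<..}"
    and t: "params_trm t \<subseteq> A" and S: "incr_in UNIV k S" and T: "incr_in (UNIV - {c}) k T"
  shows "lt i 0 (eval smul (seq_asg n a k S) t) \<longleftrightarrow> lt i 0 (eval smul (seq_asg n a k T) t)"
proof -
  define F where "F X = eval smul (seq_asg n a k X) t" for X
  have cA: "incr_in (UNIV - {c}) k X \<Longrightarrow> lt i 0 (F X) \<longleftrightarrow> lt i 0 (F T)" for X
    using indA[unfolded indiscernible_def, rule_format, of "Less i Zero t" k X T] t T
    unfolding F_def by simp
  have main: "lt i 0 (F S) \<longleftrightarrow> lt i 0 (F T)"
  proof (cases "\<forall>p<k. S p \<noteq> c")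
    case True
    show ?thesis using cA[OF incr_avoid[OF S True]] unfolding F_def by simp
  next
    case False
    then obtain p0 where p0: "p0 < k" "S p0 = c" by auto
    obtain T1 T2 where T12: "incr_in (UNIV - {c}) k T1" "incr_in (UNIV - {c}) k T2"
      "(F T1 = F S \<and> F S = F T2) \<or> (lt i (F T1) (F S) \<and> lt i (F S) (F T2))"
      using key[OF ind0 S p0 infL infR, of t i] unfolding F_def by blast
    consider (eq) "F T1 = F S \<and> F S = F T2" | (st) "lt i (F T1) (F S) \<and> lt i (F S) (F T2)"
      using T12(3) by blast
    then show ?thesis
    proof cases
      case eq
      then show ?thesis using cA[OF T12(1)] unfolding F_def by simp
    next
      case st
      show ?thesis
      proof
        assume "lt i 0 (F S)"
        then have "lt i 0 (F T2)" using st lt_trans by blast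
        then show "lt i 0 (F T)" using cA[OF T12(2)] unfolding F_def by simp
      next
        assume "lt i 0 (F T)"
        then have "lt i 0 (F T1)" using cA[OF T12(1)] by simp
        then show "lt i 0 (F S)" using st lt_trans by blast
      qed
    qed
  qed
  then show ?thesis unfolding F_def .
qed

lemma lit_eq_const:
  fixes S T :: "nat \<Rightarrow> 'o::linorder"
  assumes ind0: "indiscernible smul lt n a UNIV {}"
    and indA: "indiscernible smul lt n a (UNIV - {c}) A"
    and infL: "infinite {..<c}" and infR: "infinite {c<..}"
    and t: "params_trm t \<subseteq> A" and S: "incr_in UNIV k S" and T: "incr_in (UNIV - {c}) k T"
  shows "eval smul (seq_asg n a k S) t = 0 \<longleftrightarrow> eval smul (seq_asg n a k T) t = 0"
proof -
  define i :: 'i where "i = undefined"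
  define F where "F X = eval smul (seq_asg n a k X) t" for X
  have cA: "incr_in (UNIV - {c}) k X \<Longrightarrow> F X = 0 \<longleftrightarrow> F T = 0" for X
    using indA[unfolded indiscernible_def, rule_format, of "Eq t Zero" k X T] t T
    unfolding F_def by simp
  have cL: "incr_in (UNIV - {c}) k X \<Longrightarrow> incr_in (UNIV - {c}) k Y \<Longrightarrow> lt i 0 (F X) \<longleftrightarrow> lt i 0 (F Y)" for X Y
    using indA[unfolded indiscernible_def, rule_format, of "Less i Zero t" k X Y] t
    unfolding F_def by simp
  have main: "F S = 0 \<longleftrightarrow> F T = 0"
  proof (cases "\<forall>p<k. S p \<noteq> c")
    case True
    show ?thesis using cA[OF incr_avoid[OF S True]] unfolding F_def by simp
  next
    case False
    then obtain p0 where p0: "p0 < k" "S p0 = c" by auto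
    obtain T1 T2 where T12: "incr_in (UNIV - {c}) k T1" "incr_in (UNIV - {c}) k T2"
      "(F T1 = F S \<and> F S = F T2) \<or> (lt i (F T1) (F S) \<and> lt i (F S) (F T2))"
      using key[OF ind0 S p0 infL infR, of t i] unfolding F_def by blast
    consider (eq) "F T1 = F S \<and> F S = F T2" | (st) "lt i (F T1) (F S) \<and> lt i (F S) (F T2)"
      using T12(3) by blast
    then show ?thesis
    proof cases
      case eq
      then show ?thesis using cA[OF T12(1)] unfolding F_def by simp
    next
      case st
      have nT: "F T \<noteq> 0"
      proof
        assume "F T = 0"
        then have "F T1 = 0" "F T2 = 0" using cA[OF T12(1)] cA[OF T12(2)] by auto
        then show False using st lt_trans[of i "F T1" "F S" "F T2"] by simp
      qed
      have nS: "F S \<noteq> 0"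
      proof
        assume "F S = 0"
        then have "lt i (F T1) 0" "lt i 0 (F T2)" using st by auto
        then have "\<not> lt i 0 (F T1)" "lt i 0 (F T2)" using lt_asym by auto
        then show False using cL[OF T12(1) T12(2)] by simp
      qed
      show ?thesis using nT nS by simp
    qed
  qed
  then show ?thesis unfolding F_def .
qed

lemma dnf_const:
  fixes S T :: "nat \<Rightarrow> 'o::linorder"
  assumes ind0: "indiscernible smul lt n a UNIV {}"
    and indA: "indiscernible smul lt n a (UNIV - {c}) A"
    and infL: "infinite {..<c}" and infR: "infinite {c<..}"
    and D: "Pd A D" and S: "incr_in UNIV k S" and T: "incr_in (UNIV - {c}) k T"
  shows "dnf smul lt (seq_asg n a k S) D \<longleftrightarrow> dnf smul lt (seq_asg n a k T) D"
proof -
  have "holds smul lt (seq_asg n a k S) l \<longleftrightarrow> holds smul lt (seq_asg n a k T) l" if "lparams l \<subseteq> A" for l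
  proof (cases l)
    case (LEq t)
    then show ?thesis using lit_eq_const[OF ind0 indA infL infR _ S T, of t] that by simp
  next
    case (LNeq t)
    then show ?thesis using lit_eq_const[OF ind0 indA infL infR _ S T, of t] that by simp
  next
    case (LLt i t)
    then show ?thesis using lit_lt_const[OF ind0 indA infL infR _ S T, of t i] that by simp
  qed
  then show ?thesis using D unfolding dnf_def Pd_def by blast
qed

theorem distal:
  fixes a :: "'o::linorder \<Rightarrow> nat \<Rightarrow> 'g" and c :: 'o
  assumes infL: "infinite {..<c}" and infR: "infinite {c<..}"
    and ind0: "indiscernible smul lt n a UNIV {}"
    and indA: "indiscernible smul lt n a (UNIV - {c}) A"
  shows "indiscernible smul lt n a UNIV A"
  unfolding indiscernible_def
proof (intro allI impI)
  fix \<phi> :: "('c, 'i, 'g) fm" and k :: nat and s t :: "nat \<Rightarrow> 'o"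
  assume ph: "params \<phi> \<subseteq> A" and s: "incr_in UNIV k s" and t: "incr_in UNIV k t"
  obtain D where D: "Pd (params \<phi>) D" "\<forall>v. sat smul lt v \<phi> \<longleftrightarrow> dnf smul lt v D"
    using qe by blast
  have DA: "Pd A D" using D(1) ph unfolding Pd_def by blast
  obtain L where L: "\<forall>j<k. L j \<in> {c<..}" "\<forall>p q. p < q \<longrightarrow> q < k \<longrightarrow> L p < L q"
    using tuple_in_inf[OF infR] by blast
  have T0: "incr_in (UNIV - {c}) k L" using L unfolding incr_in_def by auto
  have "sat smul lt (seq_asg n a k s) \<phi> \<longleftrightarrow> dnf smul lt (seq_asg n a k L) D"
    using D(2) dnf_const[OF ind0 indA infL infR DA s T0] by simp
  also have "\<dots> \<longleftrightarrow> sat smul lt (seq_asg n a k t) \<phi>"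
    using D(2) dnf_const[OF ind0 indA infL infR DA t T0] by simp
  finally show "sat smul lt (seq_asg n a k s) \<phi> \<longleftrightarrow> sat smul lt (seq_asg n a k t) \<phi>" .
qed

end

theorem corollary3p5:
  fixes smul :: "'c::linordered_field \<Rightarrow> 'g::ab_group_add \<Rightarrow> 'g"
    and lt :: "'i \<Rightarrow> 'g \<Rightarrow> 'g \<Rightarrow> bool"
  assumes "model_T smul lt"
  shows "\<forall>(A::'g set) (n::nat) (a::'o::linorder \<Rightarrow> nat \<Rightarrow> 'g) (c::'o).
           infinite {..<c} \<longrightarrow> infinite {c<..} \<longrightarrow>
           indiscernible smul lt n a UNIV {} \<longrightarrow>
           indiscernible smul lt n a (UNIV - {c}) A \<longrightarrow>
           indiscernible smul lt n a UNIV A"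
proof -
  interpret tmodel smul lt by standard (rule assms)
  show ?thesis using distal by blast
qed

end
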